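(* Let $h\in\mathbb{F}[x]$ with $\deg h\ge1$ and $\mathcal{A}=\mathrm{Aut}_{\mathbb{F}}(A_h)$. Then $A_h^{\mathcal{A}}=\mathbb{F}[x]^{\mathcal{A}}$, and: (i) if $\mathcal{A}=\{\phi_f:f\in\mathbb{F}[x]\}$ then $\mathbb{F}[x]^{\mathcal{A}}=\mathbb{F}[x]$; if $\mathcal{A}=\{\phi_f\}\rtimes\tau_{\mathbb{P}}$ with $\tau_{\mathbb{P}}\cong\mathbb{F}^*$ (i.e. $h=\gamma(x-\lambda)^n$ with $\lambda\in\mathbb{F}$) and $\mathbb{F}$ is infinite, then $\mathbb{F}[x]^{\mathcal{A}}=\mathbb{F}$; (ii) $\mathbb{F}[x]^{\mathcal{A}}=\mathbb{F}[t]$ where: (a) if $\tau_{\mathbb{P}}=\tau_{1,\mathbb{G}}$, then $t(x)=\prod_{\nu\in\mathbb{G}}(x+\nu)$; (b) if $\tau_{\mathbb{P}}=\tau_{1,\mathbb{G}}\rtimes\langle\tau_{\alpha,\beta}\rangle$ with $\alpha$ a primitive $\ell$-th root of unity for some $\ell>1$, then $t(x)=\prod_{\nu\in\mathbb{G}}\left(x+\frac{\beta}{\alpha-1}+\nu\right)^{\ell}$.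
   Context: $\mathbb{F}$ is an arbitrary field. For $h\in\mathbb{F}[x]$, $A_h$ is the unital associative $\mathbb{F}$-algebra generated by $x,\hat y$ with defining relation $\hat yx-x\hat y=h$. For a group $\mathcal{A}$ of automorphisms and a subalgebra $S$, $S^{\mathcal{A}}=\{s\in S:\omega(s)=s\ \forall\omega\in\mathcal{A}\}$. Let $\mathbb{P}=\{(\alpha,\beta)\in\mathbb{F}^*\times\mathbb{F}: h(\alpha x+\beta)=\alpha^{\deg h}h(x)\}$; for $(\alpha,\beta)\in\mathbb{P}$, $\tau_{\alpha,\beta}$ is the automorphism of $A_h$ with $x\mapsto\alpha x+\beta$, $\hat y\mapsto\alpha^{\deg h-1}\hat y$; $\tau_{\mathbb{P}}=\{\tau_{\alpha,\beta}\}$. For $f\in\mathbb{F}[x]$, $\phi_f$ is the automorphism with $x\mapsto x$, $\hat y\mapsto\hat y+f$. It is known that $\mathcal{A}=\{\phi_f\}\rtimes\tau_{\mathbb{P}}$. $\mathbb{G}=\{\nu\in\mathbb{F}:(1,\nu)\in\mathbb{P}\}$, a finite additive subgroup, and $\tau_{1,\mathbb{G}}=\{\tau_{1,\nu}:\nu\in\mathbb{G}\}$. *)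

theory Defs
  imports "HOL-Computational_Algebra.Polynomial"
begin

text \<open>Concrete model of A_h = F<x,y> / (yx - xy - h) as the Ore extension F[x][y; delta],
  delta = h d/dx.  An element sum_j p_j(x) y^j (PBW normal form, x-powers on the left)
  is represented by the polynomial in y with coefficients in F[x], i.e. a value of type
  'a poly poly whose j-th coefficient is p_j.\<close>

definition Ah_delta :: "'a::field poly \<Rightarrow> 'a poly \<Rightarrow> 'a poly" where
  "Ah_delta h p = h * pderiv p"

text \<open>Multiplication of A_h, using  y^i b = sum_k (i choose k) delta^k(b) y^(i-k).\<close>
definition Ah_mult :: "'a::field poly \<Rightarrow> 'a poly poly \<Rightarrow> 'a poly poly \<Rightarrow> 'a poly poly" where
  "Ah_mult h A B =
     (\<Sum>i\<le>degree A. \<Sum>j\<le>degree B. \<Sum>k\<le>i.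
        monom (coeff A i * of_nat (i choose k) * ((Ah_delta h ^^ k) (coeff B j))) (i - k + j))"

primrec Ah_pow :: "'a::field poly \<Rightarrow> 'a poly poly \<Rightarrow> nat \<Rightarrow> 'a poly poly" where
  "Ah_pow h A 0 = 1"
| "Ah_pow h A (Suc n) = Ah_mult h A (Ah_pow h A n)"

definition Ah_emb :: "'a::field poly \<Rightarrow> 'a poly poly" where
  "Ah_emb p = [:p:]"

definition Ah_Fx :: "'a::field poly poly set" where
  "Ah_Fx = range Ah_emb"

text \<open>phi_f : x \<mapsto> x, y \<mapsto> y + f.\<close>
definition Ah_phi :: "'a::field poly \<Rightarrow> 'a poly \<Rightarrow> 'a poly poly \<Rightarrow> 'a poly poly" where
  "Ah_phi h f A = (\<Sum>i\<le>degree A. Ah_mult h [:coeff A i:] (Ah_pow h [:f, 1:] i))"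

text \<open>tau_{alpha,beta} : x \<mapsto> alpha x + beta, y \<mapsto> alpha^(deg h - 1) y.\<close>
definition Ah_tau :: "'a::field poly \<Rightarrow> 'a \<Rightarrow> 'a \<Rightarrow> 'a poly poly \<Rightarrow> 'a poly poly" where
  "Ah_tau h \<alpha> \<beta> A =
     (\<Sum>i\<le>degree A. monom (smult (\<alpha> ^ ((degree h - 1) * i)) (pcompose (coeff A i) [:\<beta>, \<alpha>:])) i)"

definition Ah_P :: "'a::field poly \<Rightarrow> ('a \<times> 'a) set" where
  "Ah_P h = {(\<alpha>, \<beta>). \<alpha> \<noteq> 0 \<and> pcompose h [:\<beta>, \<alpha>:] = smult (\<alpha> ^ degree h) h}"

definition Ah_G :: "'a::field poly \<Rightarrow> 'a set" where
  "Ah_G h = {\<nu>. (1, \<nu>) \<in> Ah_P h}"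

definition Ah_tauP :: "'a::field poly \<Rightarrow> ('a poly poly \<Rightarrow> 'a poly poly) set" where
  "Ah_tauP h = (\<lambda>(\<alpha>, \<beta>). Ah_tau h \<alpha> \<beta>) ` Ah_P h"

text \<open>The automorphism group Aut_F(A_h) = {phi_f} \<rtimes> tau_P (the known description
  quoted in the context).\<close>
definition Ah_Aut :: "'a::field poly \<Rightarrow> ('a poly poly \<Rightarrow> 'a poly poly) set" where
  "Ah_Aut h = {Ah_phi h f \<circ> t | f t. t \<in> Ah_tauP h}"

definition invariants :: "('b \<Rightarrow> 'b) set \<Rightarrow> 'b set \<Rightarrow> 'b set" where
  "invariants \<A> S = {s \<in> S. \<forall>\<omega>\<in>\<A>. \<omega> s = s}"

end

theory Submission
  imports Defs
begin


lemma smult_sum_right: "smult a (sum f A) = (\<Sum>i\<in>A. smult a (f i))"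
  by (induction A rule: infinite_finite_induct) (auto simp: smult_add_right)

lemma mult_const_left: "Ah_mult h [:a:] B = smult a B"
proof -
  have "Ah_mult h [:a:] B = (\<Sum>j\<le>degree B. monom (a * coeff B j) j)"
    by (simp add: Ah_mult_def)
  also have "\<dots> = smult a (\<Sum>j\<le>degree B. monom (coeff B j) j)"
    by (simp add: smult_sum_right smult_monom)
  finally show ?thesis by (simp add: poly_as_sum_of_monoms)
qed

lemma coeff0_mult_lin: "coeff (Ah_mult h [:f,1:] P) 0 = f * coeff P 0 + h * pderiv (coeff P 0)"
proof -
  have d: "degree [:f, 1:] = 1" by simp
  have e: "{..1::nat} = {0,1}" by auto
  show ?thesis
    unfolding Ah_mult_def d e
    by (simp add: coeff_sum coeff_monom Ah_delta_def if_distrib sum.delta cong: if_cong)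
qed

lemma phi_emb: "Ah_phi h f [:p:] = [:p:]"
  by (simp add: Ah_phi_def mult_const_left)

lemma tau_emb: "Ah_tau h a b [:p:] = [:pcompose p [:b,a:]:]"
  by (simp add: Ah_tau_def monom_0)

lemma tau_id: "Ah_tau h 1 0 = id"
  by (rule ext) (simp add: Ah_tau_def poly_as_sum_of_monoms)

lemma P10: "(1, 0) \<in> Ah_P h"
  by (simp add: Ah_P_def)

lemma phi_in_Aut: "Ah_phi h f \<in> Ah_Aut h"
proof -
  have "Ah_tau h 1 0 \<in> Ah_tauP h" unfolding Ah_tauP_def using P10 by force
  moreover have "Ah_phi h f = Ah_phi h f \<circ> Ah_tau h 1 0" by (simp add: tau_id)
  ultimately show ?thesis unfolding Ah_Aut_def by blast
qed

lemma pow_coeff0: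
  "coeff (Ah_pow h [:f,1:] n) 0 = ((\<lambda>q. f * q + h * pderiv q) ^^ n) 1"
  by (induction n) (simp_all add: coeff0_mult_lin)

lemma phi_coeff0:
  "coeff (Ah_phi h f A) 0 = (\<Sum>i\<le>degree A. coeff A i * ((\<lambda>q. f * q + h * pderiv q) ^^ i) 1)"
  by (simp add: Ah_phi_def coeff_sum mult_const_left pow_coeff0)

lemma degree_pderiv_le': "degree (pderiv q) \<le> degree q"
  by (rule degree_le) (simp add: coeff_pderiv coeff_eq_0)

lemma D_iter:
  assumes "m > degree h"
  shows "degree (((\<lambda>q. monom 1 m * q + h * pderiv q) ^^ i) 1) \<le> m * i
       \<and> coeff (((\<lambda>q. monom 1 m * q + h * pderiv q) ^^ i) 1) (m * i) = 1"
proof (induction i)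
  case 0
  then show ?case by simp
next
  case (Suc i)
  define q where "q = ((\<lambda>q. monom 1 m * q + h * pderiv q) ^^ i) 1"
  have dq: "degree q \<le> m * i" and cq: "coeff q (m*i) = 1" using Suc unfolding q_def by auto
  have d1: "degree (monom 1 m * q) \<le> m * Suc i"
    using degree_mult_le[of "monom (1::'a) m" q] dq by (simp add: degree_monom_eq)
  have d2: "degree (h * pderiv q) \<le> degree h + m * i"
    using degree_mult_le[of h "pderiv q"] degree_pderiv_le'[of q] dq by linarith
  have d2': "degree (h * pderiv q) < m * Suc i" using d2 assms by simp
  have "degree (monom 1 m * q + h * pderiv q) \<le> m * Suc i"
    using d1 d2' degree_add_le by (meson less_imp_le)
  moreover have "coeff (monom 1 m * q + h * pderiv q) (m * Suc i) = 1"
    using cq coeff_eq_0[OF d2'] by (simp add: coeff_monom_mult)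
  ultimately show ?case unfolding q_def by simp
qed



lemma fixed_all_phi_deg0:
  assumes fx: "\<And>f. Ah_phi h f A = A"
  shows "degree A = 0"
proof (rule ccontr)
  assume nz: "degree A \<noteq> 0"
  define n where "n = degree A"
  define a where "a i = coeff A i" for i
  define K where "K = (\<Sum>i\<le>n. degree (a i))"
  define m where "m = degree h + K + 1"
  define D where "D = (\<lambda>q. monom 1 m * q + h * pderiv q)"
  define Q where "Q i = (D ^^ i) 1" for i
  have mh: "m > degree h" unfolding m_def by simp
  have Q: "degree (Q i) \<le> m * i" "coeff (Q i) (m*i) = 1" for i
    using D_iter[OF mh, of i] unfolding Q_def D_def by auto
  have degQ: "degree (Q i) = m * i" for i
    using Q[of i] le_degree[of "Q i" "m*i"] by simp
  have ak: "degree (a i) \<le> K" if "i \<le> n" for i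
    unfolding K_def using that by (intro member_le_sum) auto
  have an: "a n \<noteq> 0" unfolding a_def n_def using nz by auto
  define N where "N = degree (a n) + m * n"
  have "coeff (Ah_phi h (monom 1 m) A) 0 = (\<Sum>i\<le>n. a i * Q i)"
    unfolding phi_coeff0 a_def Q_def D_def n_def ..
  hence eq: "coeff A 0 = (\<Sum>i\<le>n. a i * Q i)" using fx by simp
  have "coeff (\<Sum>i\<le>n. a i * Q i) N = (\<Sum>i\<le>n. if i = n then lead_coeff (a n) else 0)"
    unfolding coeff_sum
  proof (rule sum.cong)
    fix i assume i: "i \<in> {..n}"
    show "coeff (a i * Q i) N = (if i = n then lead_coeff (a n) else 0)"
    proof (cases "i = n")
      case True
      then show ?thesis unfolding N_def
        using coeff_mult_degree_sum[of "a n" "Q n"] Q(2)[of n] degQ[of n] by simp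
    next
      case False
      with i have "i < n" by auto
      then obtain j where j: "n = Suc j" "i \<le> j" by (metis less_Suc_eq_le lessE)
      have "m * i \<le> m * j" using j by simp
      have "degree (a i * Q i) \<le> degree (a i) + m * i"
        using degree_mult_le[of "a i" "Q i"] degQ[of i] by simp
      also have "\<dots> \<le> K + m * j" using ak[of i] i \<open>m * i \<le> m * j\<close> by (intro add_mono) auto
      also have "\<dots> < m * n" using j m_def by simp
      also have "\<dots> \<le> N" unfolding N_def by simp
      finally show ?thesis using False coeff_eq_0 by auto
    qed
  qed simp
  also have "\<dots> = lead_coeff (a n)" by simp
  finally have c1: "coeff (coeff A 0) N \<noteq> 0" using eq an by simp
  have "degree (coeff A 0) \<le> K" using ak[of 0] a_def by simp
  also have "K < m" unfolding m_def by simp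
  also have "m \<le> m * n" using nz n_def by simp
  also have "\<dots> \<le> N" unfolding N_def by simp
  finally show False using c1 coeff_eq_0 by blast
qed



lemma tauP_emb: "t \<in> Ah_tauP h \<Longrightarrow> \<exists>q. t [:p:] = [:q:]"
  unfolding Ah_tauP_def by (auto simp: tau_emb)

lemma inv_Fx:
  "invariants (Ah_Aut h) Ah_Fx = Ah_emb ` {p. \<forall>t\<in>Ah_tauP h. t [:p:] = [:p:]}"
proof (intro equalityI subsetI)
  fix s assume "s \<in> invariants (Ah_Aut h) Ah_Fx"
  then obtain p where s: "s = [:p:]" and inv: "\<And>\<omega>. \<omega> \<in> Ah_Aut h \<Longrightarrow> \<omega> [:p:] = [:p:]"
    unfolding invariants_def Ah_Fx_def Ah_emb_def by auto
  have "\<forall>t\<in>Ah_tauP h. t [:p:] = [:p:]"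
  proof
    fix t assume t: "t \<in> Ah_tauP h"
    then obtain q where q: "t [:p:] = [:q:]" using tauP_emb by blast
    have "Ah_phi h 0 \<circ> t \<in> Ah_Aut h" unfolding Ah_Aut_def using t by blast
    from inv[OF this] show "t [:p:] = [:p:]" using q by (simp add: phi_emb)
  qed
  then show "s \<in> Ah_emb ` {p. \<forall>t\<in>Ah_tauP h. t [:p:] = [:p:]}"
    using s unfolding Ah_emb_def by blast
next
  fix s assume "s \<in> Ah_emb ` {p. \<forall>t\<in>Ah_tauP h. t [:p:] = [:p:]}"
  then obtain p where s: "s = [:p:]" and inv: "\<forall>t\<in>Ah_tauP h. t [:p:] = [:p:]"
    unfolding Ah_emb_def by auto
  have "\<omega> s = s" if "\<omega> \<in> Ah_Aut h" for \<omega>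
  proof -
    from that obtain f t where "\<omega> = Ah_phi h f \<circ> t" "t \<in> Ah_tauP h"
      unfolding Ah_Aut_def by blast
    moreover have "t [:p:] = [:p:]" using inv \<open>t \<in> Ah_tauP h\<close> by blast
    ultimately show ?thesis using s by (simp add: phi_emb)
  qed
  then show "s \<in> invariants (Ah_Aut h) Ah_Fx"
    unfolding invariants_def Ah_Fx_def Ah_emb_def using s by auto
qed

lemma part0: "invariants (Ah_Aut h) UNIV = invariants (Ah_Aut h) Ah_Fx"
proof (intro equalityI subsetI)
  fix s assume s: "s \<in> invariants (Ah_Aut h) UNIV"
  have "\<And>f. Ah_phi h f s = s" using s phi_in_Aut unfolding invariants_def by blast
  hence "degree s = 0" by (rule fixed_all_phi_deg0)
  hence "s = Ah_emb (coeff s 0)" unfolding Ah_emb_def by (metis degree_eq_zeroE coeff_pCons_0)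
  then show "s \<in> invariants (Ah_Aut h) Ah_Fx"
    using s unfolding invariants_def Ah_Fx_def by auto
qed (auto simp: invariants_def)

lemma partia: "Ah_Aut h = range (Ah_phi h) \<Longrightarrow> invariants (Ah_Aut h) Ah_Fx = Ah_Fx"
  unfolding invariants_def Ah_Fx_def Ah_emb_def by (auto simp: phi_emb)

lemma inv_Fx_P:
  "invariants (Ah_Aut h) Ah_Fx = Ah_emb ` {p. \<forall>(a,b)\<in>Ah_P h. pcompose p [:b,a:] = p}"
proof -
  have "\<And>p. (\<forall>t\<in>Ah_tauP h. t [:p:] = [:p:]) \<longleftrightarrow> (\<forall>(a,b)\<in>Ah_P h. pcompose p [:b,a:] = p)"
    unfolding Ah_tauP_def by (auto simp: tau_emb)
  then show ?thesis unfolding inv_Fx by simp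
qed



lemma pcompose_power_left: "pcompose (p ^ n) q = (pcompose p q) ^ n"
  by (induction n) (simp_all add: pcompose_mult pcompose_1)

lemma lin_comp: "pcompose [:a, b:] [:c, d:] = [:a + b * c, b * d:]"
  by (simp add: pcompose_pCons algebra_simps)

lemma G_iff: "\<nu> \<in> Ah_G h \<longleftrightarrow> pcompose h [:\<nu>, 1:] = h"
  by (simp add: Ah_G_def Ah_P_def)

lemma G0: "0 \<in> Ah_G h" by (simp add: G_iff)

lemma G_add: "\<mu> \<in> Ah_G h \<Longrightarrow> \<nu> \<in> Ah_G h \<Longrightarrow> \<mu> + \<nu> \<in> Ah_G h"
proof -
  assume a: "\<mu> \<in> Ah_G h" "\<nu> \<in> Ah_G h"
  have "pcompose h [:\<mu> + \<nu>, 1:] = pcompose h (pcompose [:\<mu>, 1:] [:\<nu>, 1:])"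
    by (simp add: lin_comp add.commute)
  also have "\<dots> = h" using a by (simp add: pcompose_assoc G_iff)
  finally show ?thesis by (simp add: G_iff)
qed

lemma G_finite:
  fixes h :: "'a::field poly"
  assumes "degree h \<ge> 1"
  shows "finite (Ah_G h)"
proof -
  have nz: "h - [:poly h 0:] \<noteq> 0"
  proof
    assume "h - [:poly h 0:] = 0"
    hence "h = [:poly h 0:]" by simp
    hence "degree h = 0" by (metis degree_pCons_0)
    thus False using assms by simp
  qed
  have "Ah_G h \<subseteq> {x. poly (h - [:poly h 0:]) x = 0}"
  proof
    fix \<nu> assume "\<nu> \<in> Ah_G h"
    hence "pcompose h [:\<nu>, 1:] = h" by (simp add: G_iff)
    hence "poly (pcompose h [:\<nu>, 1:]) 0 = poly h 0" by simp
    thus "\<nu> \<in> {x. poly (h - [:poly h 0:]) x = 0}" by (simp add: poly_pcompose)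
  qed
  thus ?thesis using poly_roots_finite[OF nz] finite_subset by blast
qed

lemma image_eq_finite:
  assumes "finite G" "inj_on g G" "g ` G \<subseteq> G"
  shows "g ` G = G"
  using assms by (intro card_subset_eq) (auto simp: card_image)

lemma G_shift:
  fixes h :: "'a::field poly"
  assumes "degree h \<ge> 1" "\<mu> \<in> Ah_G h"
  shows "(\<lambda>\<nu>. \<nu> + \<mu>) ` Ah_G h = Ah_G h"
  using assms by (intro image_eq_finite G_finite) (auto simp: G_add inj_on_def)

lemma prod_shift_inv:
  fixes h :: "'a::field poly"
  assumes "degree h \<ge> 1" "\<mu> \<in> Ah_G h"
  shows "pcompose (\<Prod>\<nu>\<in>Ah_G h. [:c + \<nu>, 1:]) [:\<mu>, 1:] = (\<Prod>\<nu>\<in>Ah_G h. [:c + \<nu>, 1:])"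
proof -
  have "pcompose (\<Prod>\<nu>\<in>Ah_G h. [:c + \<nu>, 1:]) [:\<mu>, 1:] = (\<Prod>\<nu>\<in>Ah_G h. [:c + (\<nu> + \<mu>), 1:])"
    by (simp add: pcompose_prod lin_comp add.assoc)
  also have "\<dots> = (\<Prod>x\<in>(\<lambda>\<nu>. \<nu> + \<mu>) ` Ah_G h. [:c + x, 1:])"
    by (subst prod.reindex) (auto simp: inj_on_def)
  also have "\<dots> = (\<Prod>\<nu>\<in>Ah_G h. [:c + \<nu>, 1:])" using G_shift[OF assms] by simp
  finally show ?thesis .
qed

lemma degree_prod_lin:
  fixes h :: "'a::field poly"
  assumes "degree h \<ge> 1"
  shows "degree (\<Prod>\<nu>\<in>Ah_G h. [:c + \<nu>, 1:]) = card (Ah_G h)"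
  by (subst degree_prod_eq_sum_degree) auto

lemma transl_inv:
  fixes G :: "'a::field set" and r :: "'a poly"
  assumes fin: "finite G" and ne: "G \<noteq> {}" and dr: "degree r = card G"
    and rinv: "\<forall>\<nu>\<in>G. pcompose r [:\<nu>, 1:] = r"
  shows "{p. \<forall>\<nu>\<in>G. pcompose p [:\<nu>, 1:] = p} = range (\<lambda>q. pcompose q r)"
proof (intro equalityI subsetI)
  fix p assume "p \<in> range (\<lambda>q. pcompose q r)"
  then obtain q where "p = pcompose q r" by blast
  then show "p \<in> {p. \<forall>\<nu>\<in>G. pcompose p [:\<nu>, 1:] = p}"
    using rinv by (simp add: pcompose_assoc[symmetric])
next
  have cG: "card G > 0" using fin ne by (simp add: card_gt_0_iff)
  have r0: "r \<noteq> 0" using dr cG by auto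
  fix p assume "p \<in> {p. \<forall>\<nu>\<in>G. pcompose p [:\<nu>, 1:] = p}"
  hence "\<forall>\<nu>\<in>G. pcompose p [:\<nu>, 1:] = p" by simp
  thus "p \<in> range (\<lambda>q. pcompose q r)"
  proof (induction "degree p" arbitrary: p rule: less_induct)
    case less
    show ?case
    proof (cases "degree p = 0")
      case True
      then obtain c where "p = [:c:]" by (metis degree_eq_zeroE)
      then show ?thesis by (intro range_eqI[of _ _ "[:c:]"]) simp
    next
      case False
      define q where "q = p div r"
      define rm where "rm = p mod r"
      have pe: "p = q * r + rm" unfolding q_def rm_def by simp
      have drm: "degree rm < degree r"
      proof (cases "rm = 0")
        case True then show ?thesis using dr cG by simp
      next
        case False then show ?thesis using degree_mod_less[OF r0, of p] rm_def by auto
      qed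
      have inv: "pcompose q [:\<nu>, 1:] = q \<and> pcompose rm [:\<nu>, 1:] = rm" if nu: "\<nu> \<in> G" for \<nu>
      proof -
        let ?T = "[:\<nu>, 1:]"
        have "p = pcompose q ?T * r + pcompose rm ?T"
          using less.prems nu rinv pe by (metis pcompose_add pcompose_mult)
        hence e: "(pcompose q ?T - q) * r = rm - pcompose rm ?T" using pe by (simp add: algebra_simps)
        have "degree (rm - pcompose rm ?T) < degree r"
          using drm degree_diff_le_max[of rm "pcompose rm ?T"] by (simp add: degree_pcompose)
        hence "pcompose q ?T - q = 0"
          using e r0 by (metis degree_mult_eq le_add2 not_le mult_eq_0_iff)
        thus ?thesis using e by simp
      qed
      have "rm = [:poly rm 0:]"
      proof (rule poly_eqI_degree[of G])
        fix x assume "x \<in> G"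
        hence "poly (pcompose rm [:x, 1:]) 0 = poly rm 0" using inv by simp
        thus "poly rm x = poly [:poly rm 0:] x" by (simp add: poly_pcompose)
      qed (use drm dr cG in auto)
      moreover have "degree q < degree p"
        unfolding q_def using False dr cG by (intro degree_div_less) auto
      then obtain q' where q': "q = pcompose q' r" using less.hyps inv by blast
      ultimately have "p = pcompose (pCons (poly rm 0) q') r"
        using pe by (simp add: pcompose_pCons algebra_simps)
      then show ?thesis by blast
    qed
  qed
qed



lemma partiia:
  fixes h :: "'a::field poly"
  assumes dh: "degree h \<ge> 1" and tp: "Ah_tauP h = (\<lambda>\<nu>. Ah_tau h 1 \<nu>) ` Ah_G h"
  shows "invariants (Ah_Aut h) Ah_Fx = Ah_emb ` range (\<lambda>p. pcompose p (\<Prod>\<nu>\<in>Ah_G h. [:\<nu>, 1:]))"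
proof -
  have "{p. \<forall>t\<in>Ah_tauP h. t [:p:] = [:p:]} = {p. \<forall>\<nu>\<in>Ah_G h. pcompose p [:\<nu>, 1:] = p}"
    unfolding tp by (auto simp: tau_emb)
  also have "\<dots> = range (\<lambda>p. pcompose p (\<Prod>\<nu>\<in>Ah_G h. [:\<nu>, 1:]))"
  proof (rule transl_inv)
    show "degree (\<Prod>\<nu>\<in>Ah_G h. [:\<nu>, 1:]) = card (Ah_G h)"
      using degree_prod_lin[OF dh, of 0] by simp
    show "\<forall>\<mu>\<in>Ah_G h. pcompose (\<Prod>\<nu>\<in>Ah_G h. [:\<nu>, 1:]) [:\<mu>, 1:] = (\<Prod>\<nu>\<in>Ah_G h. [:\<nu>, 1:])"
      using prod_shift_inv[OF dh, of _ 0] by simp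
  qed (use G_finite[OF dh] G0 in auto)
  finally show ?thesis unfolding inv_Fx by simp
qed


lemma infinite_pow_ne1:
  assumes "infinite (UNIV :: 'a::field set)" "i > 0"
  shows "\<exists>a::'a. a \<noteq> 0 \<and> a ^ i \<noteq> 1"
proof (rule ccontr)
  assume "\<not> ?thesis"
  hence "UNIV \<subseteq> insert 0 {x::'a. poly (monom 1 i - 1) x = 0}" by (auto simp: poly_monom)
  moreover have "monom (1::'a) i - 1 \<noteq> 0"
  proof
    assume "monom (1::'a) i - 1 = 0"
    hence "coeff (monom (1::'a) i - 1) i = 0" by simp
    thus False using assms(2) by simp
  qed
  ultimately show False using assms(1) poly_roots_finite finite_subset by (metis finite_insert)
qed


lemma partib:
  fixes h :: "'a::field poly"
  assumes dh: "degree h \<ge> 1" and hf: "\<gamma> \<noteq> 0" "h = smult \<gamma> ([:-lam, 1:] ^ degree h)"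
    and inf: "infinite (UNIV :: 'a set)"
  shows "invariants (Ah_Aut h) Ah_Fx = Ah_emb ` range (\<lambda>c. [:c:])"
proof -
  define n where "n = degree h"
  define X where "X = [:-lam, 1:] ^ n"
  have hX: "h = smult \<gamma> X" unfolding X_def n_def by (rule hf(2))
  have Pin: "(a, lam - a * lam) \<in> Ah_P h" if "a \<noteq> 0" for a
  proof -
    have "pcompose [:-lam, 1:] [:lam - a * lam, a:] = smult a [:-lam, 1:]"
      by (simp add: lin_comp)
    hence "pcompose h [:lam - a * lam, a:] = smult \<gamma> ((smult a [:-lam, 1:]) ^ n)"
      unfolding hX X_def by (simp only: pcompose_power_left pcompose_smult)
    also have "\<dots> = smult \<gamma> (smult (a ^ n) X)" unfolding X_def by (simp only: smult_power)
    also have "\<dots> = smult (a ^ n) h" unfolding hX by (simp add: mult.commute)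
    finally show ?thesis using that n_def by (simp add: Ah_P_def)
  qed
  have "{p. \<forall>(a,b)\<in>Ah_P h. pcompose p [:b,a:] = p} = range (\<lambda>c. [:c:])"
  proof (intro equalityI subsetI)
    fix p assume "p \<in> {p. \<forall>(a,b)\<in>Ah_P h. pcompose p [:b,a:] = p}"
    hence pi: "pcompose p [:lam - a * lam, a:] = p" if "a \<noteq> 0" for a
      using Pin[OF that] by auto
    define q where "q = pcompose p [:lam, 1:]"
    have qi: "pcompose q [:0, a:] = q" if "a \<noteq> 0" for a
    proof -
      have "pcompose q [:0, a:] = pcompose p [:lam, a:]"
        unfolding q_def by (simp add: pcompose_assoc[symmetric] lin_comp)
      also have "\<dots> = pcompose (pcompose p [:lam - a * lam, a:]) [:lam, 1:]"
        by (simp add: pcompose_assoc[symmetric] lin_comp)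
      also have "\<dots> = q" using pi[OF that] q_def by simp
      finally show ?thesis .
    qed
    have "degree q = 0"
    proof (rule ccontr)
      assume "degree q \<noteq> 0"
      hence "\<exists>a::'a. a \<noteq> 0 \<and> a ^ degree q \<noteq> 1" using infinite_pow_ne1[OF inf] by simp
      then obtain a :: 'a where a: "a \<noteq> 0" "a ^ degree q \<noteq> 1" by blast
      have "coeff (pcompose q [:0, a:]) (degree q) = coeff q (degree q)" using qi[OF a(1)] by simp
      hence "a ^ degree q * lead_coeff q = lead_coeff q" by (simp add: coeff_pcompose_linear)
      moreover have "lead_coeff q \<noteq> 0" using \<open>degree q \<noteq> 0\<close> by auto
      ultimately show False using a(2) by simp
    qed
    then obtain c where "q = [:c:]" by (metis degree_eq_zeroE)
    hence "pcompose q [:-lam, 1:] = [:c:]" by simp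
    moreover have "pcompose q [:-lam, 1:] = p"
      unfolding q_def by (simp add: pcompose_assoc[symmetric] lin_comp)
    ultimately show "p \<in> range (\<lambda>c. [:c:])" by auto
  qed auto
  then show ?thesis unfolding inv_Fx_P by simp
qed



lemma alpha_G:
  fixes h :: "'a::field poly"
  assumes P: "(\<alpha>, \<beta>) \<in> Ah_P h" and G: "\<nu> \<in> Ah_G h"
  shows "\<alpha> * \<nu> \<in> Ah_G h"
proof -
  have a0: "\<alpha> \<noteq> 0" and hP: "pcompose h [:\<beta>, \<alpha>:] = smult (\<alpha> ^ degree h) h"
    using P by (auto simp: Ah_P_def)
  have hG: "pcompose h [:\<nu>, 1:] = h" using G by (simp add: G_iff)
  define L where "L = [:- \<beta> / \<alpha>, 1 / \<alpha>:]"
  have inv: "pcompose (pcompose X [:\<beta>, \<alpha>:]) L = X" for X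
  proof -
    have "pcompose [:\<beta>, \<alpha>:] L = [:0, 1:]" unfolding L_def using a0 by (simp add: lin_comp)
    thus ?thesis by (simp add: pcompose_assoc[symmetric])
  qed
  have "pcompose (pcompose h [:\<alpha> * \<nu>, 1:]) [:\<beta>, \<alpha>:] = pcompose h [:\<alpha> * \<nu> + \<beta>, \<alpha>:]"
    by (simp add: pcompose_assoc[symmetric] lin_comp)
  also have "\<dots> = pcompose h (pcompose [:\<beta>, \<alpha>:] [:\<nu>, 1:])"
    by (simp add: lin_comp add.commute)
  also have "\<dots> = pcompose (pcompose h [:\<beta>, \<alpha>:]) [:\<nu>, 1:]" by (simp add: pcompose_assoc)
  also have "\<dots> = pcompose h [:\<beta>, \<alpha>:]" using hP hG by (simp add: pcompose_smult)
  finally have "pcompose (pcompose (pcompose h [:\<alpha> * \<nu>, 1:]) [:\<beta>, \<alpha>:]) L = pcompose (pcompose h [:\<beta>, \<alpha>:]) L"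
    by simp
  hence "pcompose h [:\<alpha> * \<nu>, 1:] = h" by (simp only: inv)
  thus ?thesis by (simp add: G_iff)
qed

lemma alpha_card:
  fixes G :: "'a::field set"
  assumes fin: "finite G" and G0: "0 \<in> G" and a0: "\<alpha> \<noteq> 0" and cl: "\<forall>\<nu>\<in>G. \<alpha> * \<nu> \<in> G"
  shows "\<alpha> ^ card G = \<alpha>"
proof -
  define G' where "G' = G - {0}"
  have fin': "finite G'" using fin G'_def by simp
  have img: "(\<lambda>\<nu>. \<alpha> * \<nu>) ` G' = G'"
    using fin' cl a0 by (intro image_eq_finite) (auto simp: G'_def inj_on_def)
  have "(\<Prod>\<nu>\<in>G'. \<nu>) = (\<Prod>\<nu>\<in>(\<lambda>\<nu>. \<alpha> * \<nu>) ` G'. \<nu>)" using img by simp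
  also have "\<dots> = (\<Prod>\<nu>\<in>G'. \<alpha> * \<nu>)" using a0 by (subst prod.reindex) (auto simp: inj_on_def)
  also have "\<dots> = \<alpha> ^ card G' * (\<Prod>\<nu>\<in>G'. \<nu>)" by (simp add: prod.distrib)
  finally have "\<alpha> ^ card G' = 1" using fin' by (simp add: G'_def)
  moreover have "card G = Suc (card G')" using fin G0 G'_def by (metis card.remove)
  ultimately show ?thesis by simp
qed

lemma prod_smult: "finite A \<Longrightarrow> (\<Prod>i\<in>A. smult a (f i)) = smult (a ^ card A) (\<Prod>i\<in>A. f i)"
  by (induction A rule: finite_induct) (auto simp: mult.commute)

lemma pcompose_monom: "pcompose (monom c i) r = smult c (r ^ i)"
  by (simp add: monom_altdef pcompose_smult pcompose_power_left pcompose_pCons)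

lemma comp_xl:
  fixes q :: "'a::field poly"
  assumes l: "l > 0" and c: "\<forall>i. coeff q i \<noteq> 0 \<longrightarrow> l dvd i"
  shows "\<exists>q'. q = pcompose q' (monom 1 l)"
proof -
  define q' where "q' = (\<Sum>i\<le>degree q. monom (coeff q (i * l)) i)"
  have "pcompose q' (monom 1 l) = (\<Sum>i\<le>degree q. monom (coeff q (i * l)) (i * l))"
    unfolding q'_def by (simp add: pcompose_sum pcompose_monom monom_power smult_monom mult.commute)
  also have "\<dots> = q"
  proof (rule poly_eqI)
    fix n
    show "coeff (\<Sum>i\<le>degree q. monom (coeff q (i * l)) (i * l)) n = coeff q n"
    proof (cases "l dvd n")
      case True
      then obtain k where k: "n = k * l" by (metis dvd_def mult.commute)
      have eq: "(i * l = n) \<longleftrightarrow> i = k" for i using k l by simp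
      show ?thesis
      proof (cases "k \<le> degree q")
        case True
        then show ?thesis using l by (simp add: coeff_sum coeff_monom eq k)
      next
        case False
        have "k \<le> n" using k l by simp
        hence "degree q < n" using False by linarith
        then show ?thesis using False l by (auto simp: coeff_sum coeff_monom eq k coeff_eq_0)
      qed
    next
      case False
      hence "(i * l = n) = False" for i by auto
      then show ?thesis using c False by (auto simp: coeff_sum coeff_monom)
    qed
  qed
  finally show ?thesis by metis
qed



lemma partiib:
  fixes h :: "'a::field poly"
  assumes dh: "degree h \<ge> 1" and l1: "l > 1" and P: "(\<alpha>, \<beta>) \<in> Ah_P h" and al: "\<alpha> ^ l = 1"
    and prim: "\<forall>k. 0 < k \<and> k < l \<longrightarrow> \<alpha> ^ k \<noteq> 1"
    and tp: "Ah_tauP h = {Ah_tau h 1 \<nu> \<circ> (Ah_tau h \<alpha> \<beta> ^^ k) | \<nu> k. \<nu> \<in> Ah_G h}"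
  shows "invariants (Ah_Aut h) Ah_Fx
               = Ah_emb ` range (\<lambda>p. pcompose p
                   (\<Prod>\<nu>\<in>Ah_G h. [:\<beta> / (\<alpha> - 1) + \<nu>, 1:] ^ l))"
proof -
  define G where "G = Ah_G h"
  define c where "c = \<beta> / (\<alpha> - 1)"
  define s where "s = (\<Prod>\<nu>\<in>G. [:c + \<nu>, 1:])"
  have a0: "\<alpha> \<noteq> 0" using P by (simp add: Ah_P_def)
  have a1: "\<alpha> \<noteq> 1" using prim l1 by auto
  have fin: "finite G" using G_finite[OF dh] G_def by simp
  have G0': "0 \<in> G" using G0 G_def by simp
  have cl: "\<forall>\<nu>\<in>G. \<alpha> * \<nu> \<in> G" using alpha_G[OF P] G_def by simp
  have acard: "\<alpha> ^ card G = \<alpha>" using alpha_card[OF fin G0' a0 cl] .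
  have imgG: "(\<lambda>\<nu>. \<alpha> * \<nu>) ` G = G"
    using fin cl a0 by (intro image_eq_finite) (auto simp: inj_on_def)
  have ds: "degree s = card G" unfolding s_def G_def using degree_prod_lin[OF dh] .
  have cG: "card G > 0" using fin G0' card_gt_0_iff by blast
  have sinv: "\<forall>\<mu>\<in>G. pcompose s [:\<mu>, 1:] = s" unfolding s_def G_def using prod_shift_inv[OF dh] by blast
  have ssig: "pcompose s [:\<beta>, \<alpha>:] = smult \<alpha> s"
  proof -
    have e: "pcompose [:c + \<nu>, 1:] [:\<beta>, \<alpha>:] = smult \<alpha> [:c + \<nu> / \<alpha>, 1:]" for \<nu>
    proof -
      have "c + \<nu> + \<beta> = \<alpha> * (c + \<nu> / \<alpha>)" unfolding c_def using a0 a1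
        by (simp add: field_simps)
      thus ?thesis by (simp add: lin_comp)
    qed
    have "pcompose s [:\<beta>, \<alpha>:] = (\<Prod>\<nu>\<in>G. smult \<alpha> [:c + \<nu> / \<alpha>, 1:])"
      unfolding s_def pcompose_prod e ..
    also have "\<dots> = smult \<alpha> (\<Prod>\<nu>\<in>G. [:c + \<nu> / \<alpha>, 1:])" by (simp only: prod_smult[OF fin] acard)
    also have "(\<Prod>\<nu>\<in>G. [:c + \<nu> / \<alpha>, 1:]) = (\<Prod>\<nu>\<in>(\<lambda>\<nu>. \<alpha> * \<nu>) ` G. [:c + \<nu> / \<alpha>, 1:])"
      using imgG by simp
    also have "\<dots> = s" unfolding s_def using a0 by (subst prod.reindex) (auto simp: inj_on_def)
    finally show ?thesis .
  qed
  have set1: "{p. \<forall>t\<in>Ah_tauP h. t [:p:] = [:p:]}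
      = {p. (\<forall>\<nu>\<in>G. pcompose p [:\<nu>, 1:] = p) \<and> pcompose p [:\<beta>, \<alpha>:] = p}"
  proof (intro equalityI subsetI)
    fix p assume "p \<in> {p. \<forall>t\<in>Ah_tauP h. t [:p:] = [:p:]}"
    hence pt: "\<And>t. t \<in> Ah_tauP h \<Longrightarrow> t [:p:] = [:p:]" by simp
    have "\<forall>\<nu>\<in>G. pcompose p [:\<nu>, 1:] = p"
    proof
      fix \<nu> assume "\<nu> \<in> G"
      hence "Ah_tau h 1 \<nu> \<circ> (Ah_tau h \<alpha> \<beta> ^^ 0) \<in> Ah_tauP h" unfolding tp G_def by blast
      from pt[OF this] show "pcompose p [:\<nu>, 1:] = p" by (simp add: tau_emb)
    qed
    moreover have "Ah_tau h 1 0 \<circ> (Ah_tau h \<alpha> \<beta> ^^ 1) \<in> Ah_tauP h" unfolding tp using G0 by blast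
    from pt[OF this] have "pcompose p [:\<beta>, \<alpha>:] = p" by (simp add: tau_emb tau_id)
    ultimately show "p \<in> {p. (\<forall>\<nu>\<in>G. pcompose p [:\<nu>, 1:] = p) \<and> pcompose p [:\<beta>, \<alpha>:] = p}" by simp
  next
    fix p assume "p \<in> {p. (\<forall>\<nu>\<in>G. pcompose p [:\<nu>, 1:] = p) \<and> pcompose p [:\<beta>, \<alpha>:] = p}"
    hence p1: "\<forall>\<nu>\<in>G. pcompose p [:\<nu>, 1:] = p" and p2: "pcompose p [:\<beta>, \<alpha>:] = p" by auto
    have pk: "(Ah_tau h \<alpha> \<beta> ^^ k) [:p:] = [:p:]" for k
      by (induction k) (simp_all add: tau_emb p2)
    show "p \<in> {p. \<forall>t\<in>Ah_tauP h. t [:p:] = [:p:]}"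
      unfolding tp using p1 pk by (auto simp: tau_emb G_def)
  qed
  have set2: "{p. (\<forall>\<nu>\<in>G. pcompose p [:\<nu>, 1:] = p) \<and> pcompose p [:\<beta>, \<alpha>:] = p}
      = range (\<lambda>q. pcompose q (s ^ l))"
  proof (intro equalityI subsetI)
    fix p assume "p \<in> {p. (\<forall>\<nu>\<in>G. pcompose p [:\<nu>, 1:] = p) \<and> pcompose p [:\<beta>, \<alpha>:] = p}"
    hence p1: "p \<in> {p. \<forall>\<nu>\<in>G. pcompose p [:\<nu>, 1:] = p}" and p2: "pcompose p [:\<beta>, \<alpha>:] = p" by auto
    from p1 obtain q where q: "p = pcompose q s"
      using transl_inv[OF fin _ ds sinv] G0' by blast
    have "pcompose (pcompose q [:0, \<alpha>:]) s = pcompose q (smult \<alpha> s)"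
      by (simp add: pcompose_assoc[symmetric] pcompose_pCons)
    also have "\<dots> = pcompose p [:\<beta>, \<alpha>:]" using q ssig by (simp add: pcompose_assoc[symmetric])
    also have "\<dots> = pcompose q s" using p2 q by simp
    finally have "pcompose (pcompose q [:0, \<alpha>:] - q) s = 0" by (simp add: pcompose_diff)
    moreover have "degree s > 0" using ds cG by simp
    ultimately have "pcompose q [:0, \<alpha>:] - q = 0" by (rule pcompose_eq_0)
    hence qa: "pcompose q [:0, \<alpha>:] = q" by simp
    have "\<forall>i. coeff q i \<noteq> 0 \<longrightarrow> l dvd i"
    proof (intro allI impI)
      fix i assume nz: "coeff q i \<noteq> 0"
      have "\<alpha> ^ i * coeff q i = coeff q i" using arg_cong[OF qa, of "\<lambda>r. coeff r i"]
        by (simp add: coeff_pcompose_linear)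
      hence ai: "\<alpha> ^ i = 1" using nz by simp
      have "\<alpha> ^ i = \<alpha> ^ (l * (i div l) + i mod l)" by simp
      also have "\<dots> = (\<alpha> ^ l) ^ (i div l) * \<alpha> ^ (i mod l)" by (simp only: power_add power_mult)
      finally have "\<alpha> ^ (i mod l) = 1" using ai al by simp
      moreover have "i mod l < l" using l1 by simp
      ultimately have "i mod l = 0" using prim by (cases "i mod l = 0") auto
      thus "l dvd i" by auto
    qed
    moreover have "l > 0" using l1 by simp
    ultimately obtain q' where "q = pcompose q' (monom 1 l)" using comp_xl by blast
    hence "p = pcompose q' (s ^ l)" using q by (simp add: pcompose_assoc[symmetric] pcompose_monom)
    thus "p \<in> range (\<lambda>q. pcompose q (s ^ l))" by blast
  next
    fix p assume "p \<in> range (\<lambda>q. pcompose q (s ^ l))"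
    then obtain q where q: "p = pcompose q (s ^ l)" by blast
    have "\<forall>\<nu>\<in>G. pcompose p [:\<nu>, 1:] = p"
      using q sinv by (simp add: pcompose_assoc[symmetric] pcompose_power_left)
    moreover have "pcompose p [:\<beta>, \<alpha>:] = p"
      using q ssig al by (simp add: pcompose_assoc[symmetric] pcompose_power_left smult_power)
    ultimately show "p \<in> {p. (\<forall>\<nu>\<in>G. pcompose p [:\<nu>, 1:] = p) \<and> pcompose p [:\<beta>, \<alpha>:] = p}" by simp
  qed
  have "(\<Prod>\<nu>\<in>Ah_G h. [:\<beta> / (\<alpha> - 1) + \<nu>, 1:] ^ l) = s ^ l"
    unfolding s_def c_def G_def by (simp add: prod_power_distrib)
  then show ?thesis unfolding inv_Fx set1 set2 by simp
qed


theorem theorem8p9: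
  fixes h :: "'a::field poly"
  assumes "degree h \<ge> 1"
  shows "invariants (Ah_Aut h) UNIV = invariants (Ah_Aut h) Ah_Fx
    \<and> (Ah_Aut h = range (Ah_phi h) \<longrightarrow> invariants (Ah_Aut h) Ah_Fx = Ah_Fx)
    \<and> ((\<exists>\<gamma> lam. \<gamma> \<noteq> 0 \<and> h = smult \<gamma> ([:-lam, 1:] ^ degree h)) \<and> infinite (UNIV :: 'a set)
         \<longrightarrow> invariants (Ah_Aut h) Ah_Fx = Ah_emb ` range (\<lambda>c. [:c:]))
    \<and> (Ah_tauP h = (\<lambda>\<nu>. Ah_tau h 1 \<nu>) ` Ah_G h
         \<longrightarrow> invariants (Ah_Aut h) Ah_Fx
               = Ah_emb ` range (\<lambda>p. pcompose p (\<Prod>\<nu>\<in>Ah_G h. [:\<nu>, 1:])))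
    \<and> (\<forall>\<alpha> \<beta> (l::nat).
         l > 1 \<and> (\<alpha>, \<beta>) \<in> Ah_P h \<and> \<alpha> ^ l = 1 \<and> (\<forall>k. 0 < k \<and> k < l \<longrightarrow> \<alpha> ^ k \<noteq> 1)
         \<and> Ah_tauP h = {Ah_tau h 1 \<nu> \<circ> (Ah_tau h \<alpha> \<beta> ^^ k) | \<nu> k. \<nu> \<in> Ah_G h}
         \<longrightarrow> invariants (Ah_Aut h) Ah_Fx
               = Ah_emb ` range (\<lambda>p. pcompose p
                   (\<Prod>\<nu>\<in>Ah_G h. [:\<beta> / (\<alpha> - 1) + \<nu>, 1:] ^ l)))"
  proof -
  have b: "Ah_tau h 1 0 = id" by (rule tau_id)
  show ?thesis
  proof (intro conjI impI allI)
    show "invariants (Ah_Aut h) UNIV = invariants (Ah_Aut h) Ah_Fx" by (rule part0)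
  next
    assume "Ah_Aut h = range (Ah_phi h)"
    thus "invariants (Ah_Aut h) Ah_Fx = Ah_Fx" by (rule partia)
  next
    assume a: "(\<exists>\<gamma> lam. \<gamma> \<noteq> 0 \<and> h = smult \<gamma> ([:-lam, 1:] ^ degree h)) \<and> infinite (UNIV :: 'a set)"
    then obtain \<gamma> lam where g1: "\<gamma> \<noteq> 0" and g2: "h = smult \<gamma> ([:-lam, 1:] ^ degree h)" by blast
    from a have inf: "infinite (UNIV :: 'a set)" by (rule conjunct2)
    show "invariants (Ah_Aut h) Ah_Fx = Ah_emb ` range (\<lambda>c. [:c:])"
      by (rule partib[OF assms g1 g2 inf])
  next
    assume "Ah_tauP h = (\<lambda>\<nu>. Ah_tau h 1 \<nu>) ` Ah_G h"
    thus "invariants (Ah_Aut h) Ah_Fx = Ah_emb ` range (\<lambda>p. pcompose p (\<Prod>\<nu>\<in>Ah_G h. [:\<nu>, 1:]))"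
      by (rule partiia[OF assms])
  next
    fix \<alpha> \<beta> and l :: nat
    assume "l > 1 \<and> (\<alpha>, \<beta>) \<in> Ah_P h \<and> \<alpha> ^ l = 1 \<and> (\<forall>k. 0 < k \<and> k < l \<longrightarrow> \<alpha> ^ k \<noteq> 1)
         \<and> Ah_tauP h = {Ah_tau h 1 \<nu> \<circ> (Ah_tau h \<alpha> \<beta> ^^ k) | \<nu> k. \<nu> \<in> Ah_G h}"
    note cs = this
    note c1 = cs[THEN conjunct1]
    note c2 = cs[THEN conjunct2, THEN conjunct1]
    note c3 = cs[THEN conjunct2, THEN conjunct2, THEN conjunct1]
    note c4 = cs[THEN conjunct2, THEN conjunct2, THEN conjunct2, THEN conjunct1]
    note c5 = cs[THEN conjunct2, THEN conjunct2, THEN conjunct2, THEN conjunct2]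
    show "invariants (Ah_Aut h) Ah_Fx
               = Ah_emb ` range (\<lambda>p. pcompose p
                   (\<Prod>\<nu>\<in>Ah_G h. [:\<beta> / (\<alpha> - 1) + \<nu>, 1:] ^ l))"
      by (rule partiib[OF assms c1 c2 c3 c4 c5])
  qed
qed

end
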